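(* In multihop Peg Duotaire, for every integer $n\ge 1$, the position $1^n$ (a block of $n$ consecutive pegs) has nim-value $0$ if $n\equiv 0$ or $1 \pmod 4$, and nim-value $1$ if $n\equiv 2$ or $3\pmod 4$.
   Context: Peg Duotaire is an impartial two-player game played on the infinite line of sites indexed by $\mathbb{Z}$, each site holding a peg or being a hole, with finitely many pegs. A word $w\in\{0,1\}^*$ denotes the position in which $w$ is written on consecutive sites ($1$ = peg, $0$ = hole) and all other sites are holes. A hop: for a peg at site $i$, a peg at site $i+d$ and a hole at site $i+2d$ ($d=\pm1$), move the peg from $i$ to $i+2d$ and remove the peg at $i+d$. In the multihop version, a move is a sequence of one or more hops all performed by the same peg. Players alternate moves; a player unable to move loses. The nim-value of a position is the least nonnegative integer not among the nim-values of positions reachable in one move. *)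

theory Defs
  imports Main
begin

text \<open>A position is the (finite) set of sites holding a peg.\<close>
type_synonym position = "int set"

definition hop_result :: "position \<Rightarrow> int \<Rightarrow> int \<Rightarrow> position" where
  "hop_result P i d = (P - {i, i + d}) \<union> {i + 2 * d}"

definition can_hop :: "position \<Rightarrow> int \<Rightarrow> int \<Rightarrow> bool" where
  "can_hop P i d \<longleftrightarrow> (d = 1 \<or> d = -1) \<and> i \<in> P \<and> i + d \<in> P \<and> i + 2 * d \<notin> P"

inductive multihop :: "position \<Rightarrow> int \<Rightarrow> position \<Rightarrow> int \<Rightarrow> bool" where
  first: "can_hop P j d \<Longrightarrow> multihop P j (hop_result P j d) (j + 2 * d)"
| more: "multihop P j Q k \<Longrightarrow> can_hop Q k d \<Longrightarrow> multihop P j (hop_result Q k d) (k + 2 * d)"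

definition move :: "position \<Rightarrow> position \<Rightarrow> bool" where
  "move P Q \<longleftrightarrow> (\<exists>j k. multihop P j Q k)"

definition mex :: "nat set \<Rightarrow> nat" where
  "mex S = (LEAST m. m \<notin> S)"

text \<open>Nim-value computed with a fuel parameter; every move removes at least one peg,
  so fuel = number of pegs suffices for a finite position.\<close>
fun nimv :: "nat \<Rightarrow> position \<Rightarrow> nat" where
  "nimv 0 P = 0"
| "nimv (Suc n) P = mex (nimv n ` {Q. move P Q})"

definition nim_value :: "position \<Rightarrow> nat" where
  "nim_value P = nimv (card P) P"

definition ones :: "nat \<Rightarrow> position" where
  "ones n = {0..<int n}"

end

theory Submission
  imports Defs
begin

definition good :: "int set \<Rightarrow> int \<Rightarrow> nat \<Rightarrow> int set \<Rightarrow> position \<Rightarrow> bool" where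
  "good A s m B P \<longleftrightarrow> P = A \<union> {s..<s + int m} \<union> B \<and>
     (\<forall>x\<in>A. x \<le> s - 3 \<and> x + 1 \<notin> A) \<and> (\<forall>x\<in>B. x \<ge> s + int m + 2 \<and> x + 1 \<notin> B)"

lemma hop_good:
  assumes g: "good A s m B P" and h: "can_hop P i d"
  shows "2 \<le> m \<and> ((i = s + 1 \<and> d = -1) \<or> (i = s + int m - 2 \<and> d = 1))"
proof -
  have P: "P = A \<union> {s..<s + int m} \<union> B" and gA: "\<And>x. x\<in>A \<Longrightarrow> x \<le> s - 3 \<and> x + 1 \<notin> A"
    and gB: "\<And>x. x\<in>B \<Longrightarrow> x \<ge> s + int m + 2 \<and> x + 1 \<notin> B" using g by (auto simp: good_def)
  have mem: "\<And>x. x \<in> P \<longleftrightarrow> x \<in> A \<or> (s \<le> x \<and> x < s + int m) \<or> x \<in> B"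
    unfolding P by auto
  have d: "d = 1 \<or> d = -1" and i: "i \<in> P" and id: "i + d \<in> P" and i2: "i + 2 * d \<notin> P"
    using h by (auto simp: can_hop_def)
  have a1: "i \<in> A \<Longrightarrow> i \<le> s - 3 \<and> i + 1 \<notin> A" using gA by blast
  have a2: "i - 1 \<in> A \<Longrightarrow> i - 1 \<le> s - 3 \<and> i \<notin> A" using gA[of "i - 1"] by simp
  have a3: "i + d \<in> A \<Longrightarrow> i + d \<le> s - 3" using gA by blast
  have b1: "i \<in> B \<Longrightarrow> i \<ge> s + int m + 2 \<and> i + 1 \<notin> B" using gB by blast
  have b2: "i - 1 \<in> B \<Longrightarrow> i - 1 \<ge> s + int m + 2 \<and> i \<notin> B" using gB[of "i - 1"] by simp
  have b3: "i + d \<in> B \<Longrightarrow> i + d \<ge> s + int m + 2" using gB by blast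
  show ?thesis using d
  proof
    assume d1: "d = 1"
    have "i + 1 \<in> A \<or> (s \<le> i + 1 \<and> i + 1 < s + int m) \<or> i + 1 \<in> B" using id d1 mem by simp
    moreover have "i \<in> A \<or> (s \<le> i \<and> i < s + int m) \<or> i \<in> B" using i mem by simp
    moreover have "\<not> (s \<le> i + 2 \<and> i + 2 < s + int m)" using i2 d1 mem by simp
    ultimately show ?thesis using d1 a1 a3 b1 b3 by auto
  next
    assume d1: "d = -1"
    have "i - 1 \<in> A \<or> (s \<le> i - 1 \<and> i - 1 < s + int m) \<or> i - 1 \<in> B" using id d1 mem by simp
    moreover have "i \<in> A \<or> (s \<le> i \<and> i < s + int m) \<or> i \<in> B" using i mem by simp
    moreover have "\<not> (s \<le> i - 2 \<and> i - 2 < s + int m)" using i2 d1 mem by simp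
    ultimately show ?thesis using d1 a1 a2 a3 b1 b2 b3 by auto
  qed
qed

lemma good_succ1:
  assumes "good A s m B P" "2 \<le> m"
  shows "good (A \<union> {s - 1}) (s + 2) (m - 2) B ((A \<union> {s - 1}) \<union> {s + 2..<s + int m} \<union> B)"
  using assms unfolding good_def by (auto simp: of_nat_diff)

lemma good_succ2:
  assumes "good A s m B P" "2 \<le> m"
  shows "good A s (m - 2) ({s + int m} \<union> B) (A \<union> {s..<s + int m - 2} \<union> ({s + int m} \<union> B))"
  using assms unfolding good_def by (auto simp: of_nat_diff)

lemma hopres1:
  assumes "good A s m B P" "2 \<le> m"
  shows "hop_result P (s + 1) (-1) = (A \<union> {s - 1}) \<union> {s + 2..<s + int m} \<union> B"
  using assms unfolding good_def hop_result_def by auto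

lemma hopres2:
  assumes "good A s m B P" "2 \<le> m"
  shows "hop_result P (s + int m - 2) 1 = A \<union> {s..<s + int m - 2} \<union> ({s + int m} \<union> B)"
  using assms unfolding good_def hop_result_def by auto

lemma canhop1:
  assumes "good A s m B P" "2 \<le> m"
  shows "can_hop P (s + 1) (-1)"
  using assms unfolding good_def can_hop_def by auto

lemma multihop_good:
  assumes "multihop P j Q k" "good A s m B P"
  shows "2 \<le> m \<and> ((Q = (A \<union> {s - 1}) \<union> {s + 2..<s + int m} \<union> B \<and> k = s - 1) \<or>
     (Q = A \<union> {s..<s + int m - 2} \<union> ({s + int m} \<union> B) \<and> k = s + int m))"
  using assms
proof (induction rule: multihop.induct)
  case (first P j d)
  from hop_good[OF first(2) first(1)] have "2 \<le> m" and c: "(j = s + 1 \<and> d = -1) \<or> (j = s + int m - 2 \<and> d = 1)" by auto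
  then show ?case using hopres1[OF first(2)] hopres2[OF first(2)] by auto
next
  case (more P j Q k d)
  from more.IH[OF more.prems] have m2: "2 \<le> m" and c: "(Q = (A \<union> {s - 1}) \<union> {s + 2..<s + int m} \<union> B \<and> k = s - 1) \<or>
     (Q = A \<union> {s..<s + int m - 2} \<union> ({s + int m} \<union> B) \<and> k = s + int m)" by auto
  show ?case using c
  proof
    assume q: "Q = (A \<union> {s - 1}) \<union> {s + 2..<s + int m} \<union> B \<and> k = s - 1"
    have "good (A \<union> {s - 1}) (s + 2) (m - 2) B Q" using good_succ1[OF more.prems m2] q by simp
    from hop_good[OF this \<open>can_hop Q k d\<close>] have "k = s + 2 + 1 \<or> k = s + 2 + int (m - 2) - 2" by blast
    moreover have "int (m - 2) = int m - 2" using m2 by simp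
    ultimately have False using q m2 by linarith
    thus ?thesis ..
  next
    assume q: "Q = A \<union> {s..<s + int m - 2} \<union> ({s + int m} \<union> B) \<and> k = s + int m"
    have "good A s (m - 2) ({s + int m} \<union> B) Q" using good_succ2[OF more.prems m2] q by simp
    from hop_good[OF this \<open>can_hop Q k d\<close>] have "k = s + 1 \<or> k = s + int (m - 2) - 2" by blast
    moreover have "int (m - 2) = int m - 2" using m2 by simp
    ultimately have False using q m2 by linarith
    thus ?thesis ..
  qed
qed

lemma mex_empty: "mex {} = 0" by (simp add: mex_def)
lemma mex_single: "mex {v} = (if v = 0 then 1 else 0)"
  unfolding mex_def by (rule Least_equality) auto

lemma nimv_good:
  "good A s m B P \<Longrightarrow> m div 2 \<le> k \<Longrightarrow> nimv k P = (m div 2) mod 2"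
proof (induction k arbitrary: A s m B P)
  case 0 thus ?case by simp
next
  case (Suc k)
  show ?case
  proof (cases "2 \<le> m")
    case False
    hence "{Q. move P Q} = {}" using multihop_good Suc.prems(1) by (auto simp: move_def)
    hence e: "nimv k ` {Q. move P Q} = {}" by blast
    have "nimv (Suc k) P = mex (nimv k ` {Q. move P Q})" by simp
    also have "\<dots> = 0" unfolding e by (rule mex_empty)
    finally show ?thesis using False by simp
  next
    case True
    let ?Q1 = "(A \<union> {s - 1}) \<union> {s + 2..<s + int m} \<union> B"
    let ?Q2 = "A \<union> {s..<s + int m - 2} \<union> ({s + int m} \<union> B)"
    have mv: "{Q. move P Q} \<subseteq> {?Q1, ?Q2}"
    proof
      fix Q assume "Q \<in> {Q. move P Q}"
      then obtain j k where "multihop P j Q k" by (auto simp: move_def)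
      from multihop_good[OF this Suc.prems(1)] show "Q \<in> {?Q1, ?Q2}" by blast
    qed
    have "multihop P (s + 1) (hop_result P (s + 1) (-1)) (s + 1 + 2 * (-1))"
      by (rule multihop.first, rule canhop1[OF Suc.prems(1) True])
    hence m1: "move P ?Q1" using hopres1[OF Suc.prems(1) True] move_def by metis
    have md: "(m - 2) div 2 \<le> k" using Suc.prems(2) True by linarith
    have v1: "nimv k ?Q1 = ((m - 2) div 2) mod 2"
      by (rule Suc.IH[OF good_succ1[OF Suc.prems(1) True] md])
    have v2: "nimv k ?Q2 = ((m - 2) div 2) mod 2"
      by (rule Suc.IH[OF good_succ2[OF Suc.prems(1) True] md])
    have "nimv k ` {Q. move P Q} = {((m - 2) div 2) mod 2}"
    proof
      show "nimv k ` {Q. move P Q} \<subseteq> {((m - 2) div 2) mod 2}" using mv v1 v2 by auto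
      have "nimv k ?Q1 \<in> nimv k ` {Q. move P Q}" using m1 by blast
      thus "{((m - 2) div 2) mod 2} \<subseteq> nimv k ` {Q. move P Q}" using v1 by simp
    qed
    moreover have "(m - 2) div 2 = m div 2 - 1" using True by (simp add: div_if)
    ultimately show ?thesis using True by (simp add: mex_single) presburger
  qed
qed

theorem mainTheorem7:
  fixes n :: nat
  assumes "n \<ge> 1"
  shows "nim_value (ones n) = (if n mod 4 = 0 \<or> n mod 4 = 1 then 0 else 1)"
proof -
  have g: "good {} 0 n {} (ones n)" by (simp add: good_def ones_def)
  have "nim_value (ones n) = (n div 2) mod 2"
    unfolding nim_value_def by (rule nimv_good[OF g]) (simp add: ones_def)
  thus ?thesis by presburger
qed

end
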